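(* Let $k$ be a field, $d_1,\ldots,d_n$ positive integers, $A=k[x_1, \ldots, x_n]/(x_1^{d_1}, \ldots, x_n^{d_n})$, and suppose that $t=\sum_{i=1}^n(d_i-1)$ is odd. If $A$ has the weak Lefschetz property, then so does $A[x]/(x^2)$, where $x$ is a new variable of degree $1$.
   Context: Algebras are graded by degree, $A=\bigoplus_{i\ge0}A_i$. A graded artinian algebra $A$ has the weak Lefschetz property if there is a linear form $\ell\in A_1$ such that for every $i$ the map $A_i\to A_{i+1}$, $a\mapsto \ell a$, is injective or surjective. *)

theory Defs
  imports Main
begin

text \<open>The monomial complete intersection A = k[x_1..x_n]/(x_1^d_1,...,x_n^d_n),
  with ds = [d_1,...,d_n], is represented through its standard monomial basis:
  the monomials x^a with 0 <= a_j < d_j. An element of A is a coefficient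
  function on exponent vectors (nat lists of length n) vanishing off the basis.\<close>

definition is_mon :: "nat list \<Rightarrow> nat list \<Rightarrow> bool" where
  "is_mon ds a \<longleftrightarrow> length a = length ds \<and> (\<forall>j<length ds. a ! j < ds ! j)"

definition mons :: "nat list \<Rightarrow> nat \<Rightarrow> nat list set" where
  "mons ds i = {a. is_mon ds a \<and> sum_list a = i}"

definition graded_piece :: "nat list \<Rightarrow> nat \<Rightarrow> (nat list \<Rightarrow> 'k::zero) set" where
  "graded_piece ds i = {f. \<forall>a. a \<notin> mons ds i \<longrightarrow> f a = 0}"

text \<open>Multiplication by the linear form l = sum_j c_j x_j in A:
  the coefficient of x^b in l*f is the sum over j with b_j > 0 of
  c_j times the coefficient of x^(b - e_j) in f; monomials outside the basis vanish.\<close>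
definition lin_mult :: "nat list \<Rightarrow> (nat \<Rightarrow> 'k::comm_ring_1) \<Rightarrow> (nat list \<Rightarrow> 'k) \<Rightarrow> nat list \<Rightarrow> 'k" where
  "lin_mult ds c f b =
     (if is_mon ds b
      then (\<Sum>j<length ds. if 0 < b ! j then c j * f (b[j := b ! j - 1]) else 0)
      else 0)"

definition has_WLP :: "'k::field itself \<Rightarrow> nat list \<Rightarrow> bool" where
  "has_WLP _ ds \<longleftrightarrow>
     (\<exists>c :: nat \<Rightarrow> 'k. \<forall>i.
        inj_on (lin_mult ds c) (graded_piece ds i) \<or>
        lin_mult ds c ` graded_piece ds i = graded_piece ds (Suc i))"

end

theory Submission
  imports Defs "HOL.Vector_Spaces" "HOL-Library.Function_Algebras"
begin

context vector_space begin

lemma inj_imp_surj_card: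
  assumes fE: "finite E" and fF: "finite F" and iE: "independent E" and iF: "independent F"
    and cEF: "card E = card F" and lin: "Vector_Spaces.linear scale scale f"
    and sub: "f ` span E \<subseteq> span F" and inj: "inj_on f (span E)"
  shows "f ` span E = span F"
proof -
  interpret lf: module_hom scale scale f using lin by (simp add: module_hom_iff_linear)
  have ind: "independent (f ` E)" using lf.independent_injective_image iE inj by blast
  have cfE: "card (f ` E) = card F" using inj cEF by (metis card_image inj_on_subset span_superset)
  have "span F \<subseteq> span (f ` E)"
  proof
    fix w assume w: "w \<in> span F"
    show "w \<in> span (f ` E)"
    proof (rule ccontr)
      assume nw: "w \<notin> span (f ` E)"
      then have "independent (insert w (f ` E))" using independent_insertI ind by blast
      moreover have "insert w (f ` E) \<subseteq> span F" using w sub span_superset by blast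
      ultimately have "card (insert w (f ` E)) \<le> card F" using independent_span_bound fF by blast
      moreover have "w \<notin> f ` E" using nw span_superset by blast
      ultimately show False using cfE fE by simp
    qed
  qed
  then show ?thesis using sub lf.span_image by auto
qed

lemma surj_imp_inj_card:
  assumes fE: "finite E" and fF: "finite F" and iE: "independent E" and iF: "independent F"
    and cEF: "card E = card F" and lin: "Vector_Spaces.linear scale scale f"
    and sur: "f ` span E = span F"
  shows "inj_on f (span E)"
proof -
  interpret lf: module_hom scale scale f using lin by (simp add: module_hom_iff_linear)
  have "\<forall>v\<in>span E. f v = 0 \<longrightarrow> v = 0"
  proof (intro ballI impI, rule ccontr)
    fix v assume v: "v \<in> span E" "f v = 0" "v \<noteq> 0"
    have "independent {v}" using v(3) by (simp add: independent_insert)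
    then obtain B where B: "{v} \<subseteq> B" "B \<subseteq> span E" "independent B" "span E \<subseteq> span B"
      using maximal_independent_subset_extend[of "{v}" "span E"] v(1) by blast
    have fB: "finite B" and cB: "card B \<le> card E" using independent_span_bound[OF fE B(3) B(2)] by auto
    have "span F \<subseteq> f ` span B" using sur B(4) by blast
    also have "\<dots> = span (f ` B)" using lf.span_image by simp
    also have "f ` B = insert 0 (f ` (B - {v}))" using B(1) v(2) by auto
    finally have "span F \<subseteq> span (f ` (B - {v}))" by simp
    then have "F \<subseteq> span (f ` (B - {v}))" using span_superset by blast
    then have "card F \<le> card (f ` (B - {v}))" using independent_span_bound iF fB by blast
    also have "\<dots> \<le> card (B - {v})" using fB card_image_le by blast
    also have "\<dots> < card B" using fB B(1) by (meson card_Diff1_less singletonI subset_iff)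
    finally show False using cB cEF by simp
  qed
  then show ?thesis using lf.inj_on_iff_eq_0 subspace_span by blast
qed

end

definition sc :: "'k::field \<Rightarrow> ('a \<Rightarrow> 'k) \<Rightarrow> 'a \<Rightarrow> 'k" where
  "sc r f = (\<lambda>x. r * f x)"

lemma vs_sc: "vector_space (sc :: 'k::field \<Rightarrow> ('a \<Rightarrow> 'k) \<Rightarrow> 'a \<Rightarrow> 'k)"
  by unfold_locales (auto simp: sc_def fun_eq_iff algebra_simps)

interpretation fvs: vector_space "sc :: 'k::field \<Rightarrow> ('a \<Rightarrow> 'k) \<Rightarrow> 'a \<Rightarrow> 'k"
  by (rule vs_sc)

lemma sum_fun_apply: "(\<Sum>j\<in>A. F j) x = (\<Sum>j\<in>A. F j x)"
  by (induction A rule: infinite_finite_induct) auto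

lemma module_homI_sc:
  assumes "\<And>f g. F (f + g) = F f + F g" "\<And>r f. F (sc r f) = sc r (F f)"
  shows "module_hom (sc :: 'k::field \<Rightarrow> ('a \<Rightarrow> 'k) \<Rightarrow> 'a \<Rightarrow> 'k) (sc :: 'k \<Rightarrow> ('b \<Rightarrow> 'k) \<Rightarrow> 'b \<Rightarrow> 'k) F"
  using assms vs_sc[where 'a='a and 'k='k] vs_sc[where 'a='b and 'k='k]
  by (auto simp: module_hom_def module_hom_axioms_def module_iff_vector_space)

definition delta :: "'a \<Rightarrow> 'a \<Rightarrow> 'k::{zero,one}" where
  "delta a = (\<lambda>x. if x = a then 1 else 0)"

lemma delta_inj: "inj (delta :: 'a \<Rightarrow> 'a \<Rightarrow> 'k::zero_neq_one)"
  by (auto simp: inj_def delta_def fun_eq_iff split: if_splits)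

lemma indep_delta: "fvs.independent (delta ` S :: ('a \<Rightarrow> 'k::field) set)"
proof -
  have "u v = 0" if H: "finite T" "T \<subseteq> delta ` S" "(\<Sum>w\<in>T. sc (u w) w) = 0" "v \<in> T"
    for T and u :: "('a \<Rightarrow> 'k) \<Rightarrow> 'k" and v
  proof -
    obtain a where a: "v = delta a" using H by blast
    have "0 = (\<Sum>w\<in>T. sc (u w) w) a" using H(3) by simp
    also have "\<dots> = (\<Sum>w\<in>T. u w * w a)" by (simp add: sum_fun_apply sc_def)
    also have "\<dots> = (\<Sum>w\<in>{v}. u w * w a)"
    proof (rule sum.mono_neutral_right)
      show "\<forall>i\<in>T - {v}. u i * i a = 0"
      proof
        fix w assume w: "w \<in> T - {v}"
        then obtain b where "w = delta b" using H by blast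
        with w a show "u w * w a = 0" by (auto simp: delta_def)
      qed
    qed (use H in auto)
    also have "\<dots> = u v" using a by (simp add: delta_def)
    finally show ?thesis by simp
  qed
  then show ?thesis unfolding fvs.independent_explicit_module by blast
qed

lemma finite_mons: "finite (mons ds i)"
proof -
  have "mons ds i \<subseteq> {xs. set xs \<subseteq> {..<sum_list ds} \<and> length xs = length ds}"
  proof
    fix a assume "a \<in> mons ds i"
    then have a: "length a = length ds" "\<forall>j<length ds. a ! j < ds ! j"
      by (auto simp: mons_def is_mon_def)
    have "x < sum_list ds" if "x \<in> set a" for x
    proof -
      obtain j where j: "j < length a" "x = a ! j" using \<open>x \<in> set a\<close> by (auto simp: in_set_conv_nth)
      have "ds ! j \<le> sum_list ds" using j a by (simp add: member_le_sum_list)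
      then show ?thesis using a j by fastforce
    qed
    then show "a \<in> {xs. set xs \<subseteq> {..<sum_list ds} \<and> length xs = length ds}" using a by auto
  qed
  then show ?thesis using finite_lists_length_eq[of "{..<sum_list ds}"] finite_subset by blast
qed

lemma graded_span: "(graded_piece ds i :: (nat list \<Rightarrow> 'k::field) set) = fvs.span (delta ` mons ds i)"
proof
  have sub: "fvs.subspace (graded_piece ds i :: (nat list \<Rightarrow> 'k) set)"
    by (auto simp: fvs.subspace_def graded_piece_def sc_def)
  show "fvs.span (delta ` mons ds i) \<subseteq> (graded_piece ds i :: (nat list \<Rightarrow> 'k) set)"
    by (rule fvs.span_minimal[OF _ sub]) (auto simp: graded_piece_def delta_def)
  show "graded_piece ds i \<subseteq> fvs.span (delta ` mons ds i :: (nat list \<Rightarrow> 'k) set)"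
  proof
    fix f :: "nat list \<Rightarrow> 'k" assume f: "f \<in> graded_piece ds i"
    have "f = (\<Sum>a\<in>mons ds i. sc (f a) (delta a))"
    proof
      fix x
      have "(\<Sum>a\<in>mons ds i. sc (f a) (delta a)) x = (\<Sum>a\<in>mons ds i. f a * delta a x)"
        by (simp add: sum_fun_apply sc_def)
      also have "\<dots> = f x"
      proof (cases "x \<in> mons ds i")
        case True
        then show ?thesis using finite_mons
          by (simp add: delta_def if_distrib sum.delta cong: if_cong)
      next
        case False
        then show ?thesis using f by (auto simp: graded_piece_def delta_def intro!: sum.neutral)
      qed
      finally show "f x = (\<Sum>a\<in>mons ds i. sc (f a) (delta a)) x" by simp
    qed
    also have "\<dots> \<in> fvs.span (delta ` mons ds i)"
      by (intro fvs.span_sum fvs.span_scale fvs.span_base) auto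
    finally show "f \<in> fvs.span (delta ` mons ds i)" .
  qed
qed

definition X :: "nat list \<Rightarrow> nat \<Rightarrow> (nat list \<Rightarrow> 'k::zero) \<Rightarrow> nat list \<Rightarrow> 'k" where
  "X ds k f b = (if is_mon ds b \<and> 0 < b ! k then f (b[k := b ! k - 1]) else 0)"

lemma lin_mult_X: "lin_mult ds c f = (\<Sum>j<length ds. sc (c j) (X ds j f))"
  by (auto simp: fun_eq_iff lin_mult_def sum_fun_apply sc_def X_def intro!: sum.cong)

lemma X_hom: "module_hom sc sc (X ds k :: (nat list \<Rightarrow> 'k::field) \<Rightarrow> _)"
  by (rule module_homI_sc) (auto simp: X_def sc_def fun_eq_iff)

lemma L_hom: "module_hom sc sc (lin_mult ds c :: (nat list \<Rightarrow> 'k::field) \<Rightarrow> _)"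
proof (rule module_homI_sc)
  fix f g :: "nat list \<Rightarrow> 'k"
  show "lin_mult ds c (f + g) = lin_mult ds c f + lin_mult ds c g"
    by (auto simp: lin_mult_def fun_eq_iff sum.distrib[symmetric] algebra_simps intro!: sum.cong)
next
  fix r and f :: "nat list \<Rightarrow> 'k"
  show "lin_mult ds c (sc r f) = sc r (lin_mult ds c f)"
    by (auto simp: lin_mult_def sc_def fun_eq_iff sum_distrib_left algebra_simps intro!: sum.cong)
qed

lemma is_mon_dec: assumes "is_mon ds b" shows "is_mon ds (b[j := b ! j - 1])"
proof -
  have H: "length b = length ds" "\<forall>j<length ds. b ! j < ds ! j" using assms by (auto simp: is_mon_def)
  have "b[j := b ! j - 1] ! i < ds ! i" if "i < length ds" for i
    using H that by (cases "i = j") (simp_all add: less_imp_diff_less)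
  then show ?thesis using H by (simp add: is_mon_def)
qed

lemma X_X: assumes "j < length ds" "k < length ds"
  shows "X ds j (X ds k f) = X ds k (X ds j f)"
proof
  fix b
  show "X ds j (X ds k f) b = X ds k (X ds j f) b"
  proof (cases "is_mon ds b")
    case True
    then have lb: "length b = length ds" by (simp add: is_mon_def)
    show ?thesis
    proof (cases "j = k")
      case True then show ?thesis by simp
    next
      case False
      have e: "b[j := b ! j - 1, k := b ! k - 1] = b[k := b ! k - 1, j := b ! j - 1]"
        by (rule list_update_swap) (use False in simp)
      show ?thesis using \<open>is_mon ds b\<close> is_mon_dec[of ds b] False e
        by (simp add: X_def)
    qed
  next
    case False then show ?thesis by (simp add: X_def)
  qed
qed

lemma L_X: assumes "k < length ds"
  shows "lin_mult ds c (X ds k f) = X ds k (lin_mult ds c (f :: nat list \<Rightarrow> 'k::field))"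
proof -
  interpret xk: module_hom sc sc "X ds k :: (nat list \<Rightarrow> 'k) \<Rightarrow> _" by (rule X_hom)
  have "(\<Sum>j<length ds. sc (c j) (X ds j (X ds k f))) = (\<Sum>j<length ds. sc (c j) (X ds k (X ds j f)))"
    by (rule sum.cong[OF refl]) (metis X_X assms lessThan_iff)
  also have "\<dots> = X ds k (\<Sum>j<length ds. sc (c j) (X ds j f))"
    by (simp only: xk.sum xk.scale)
  finally show ?thesis unfolding lin_mult_X .
qed

lemma sum_dec: "k < length (b::nat list) \<Longrightarrow> 0 < b ! k \<Longrightarrow> sum_list (b[k := b ! k - 1]) = sum_list b - 1"
  using sum_list_update[of k b "b ! k - 1"] elem_le_sum_list[of k b] by simp

lemma sum_dec': "k < length (b::nat list) \<Longrightarrow> 0 < b ! k \<Longrightarrow> sum_list b = Suc (sum_list (b[k := b ! k - 1]))"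
  using sum_dec[of k b] elem_le_sum_list[of k b] by simp

lemma L_graded: "f \<in> graded_piece ds i \<Longrightarrow> lin_mult ds c f \<in> graded_piece ds (Suc i)"
proof -
  assume f: "f \<in> graded_piece ds i"
  show ?thesis unfolding graded_piece_def mem_Collect_eq
  proof (intro allI impI)
    fix b assume b: "b \<notin> mons ds (Suc i)"
    show "lin_mult ds c f b = 0"
    proof (cases "is_mon ds b")
      case True
      then have lb: "length b = length ds" by (simp add: is_mon_def)
      have "(if 0 < b ! j then c j * f (b[j := b ! j - 1]) else 0) = 0" if j: "j < length ds" for j
      proof (cases "0 < b ! j")
        case True
        have "b[j := b ! j - 1] \<notin> mons ds i"
          using b True j lb sum_dec'[of j b] \<open>is_mon ds b\<close> by (auto simp: mons_def)
        then show ?thesis using f by (simp add: graded_piece_def)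
      qed simp
      then show ?thesis by (simp add: lin_mult_def)
    qed (simp add: lin_mult_def)
  qed
qed

lemma X_graded: assumes "k < length ds" "f \<in> graded_piece ds i"
  shows "X ds k f \<in> graded_piece ds (Suc i)"
  unfolding graded_piece_def mem_Collect_eq
proof (intro allI impI)
  fix b assume b: "b \<notin> mons ds (Suc i)"
  show "X ds k f b = 0"
  proof (cases "is_mon ds b \<and> 0 < b ! k")
    case True
    then have lb: "length b = length ds" by (simp add: is_mon_def)
    have "b[k := b ! k - 1] \<notin> mons ds i"
      using b True assms lb sum_dec'[of k b] by (auto simp: mons_def)
    then show ?thesis using assms by (simp add: graded_piece_def X_def)
  qed (auto simp add: X_def)
qed

lemma G_subspace: "fvs.subspace (graded_piece ds i :: (nat list \<Rightarrow> 'k::field) set)"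
  unfolding graded_span by (rule fvs.subspace_span)

lemma socle:
  assumes f: "f \<in> graded_piece ds j" and jt: "j < (\<Sum>d\<leftarrow>ds. d - 1)"
    and X0: "\<forall>k<length ds. X ds k f = (0 :: nat list \<Rightarrow> 'k::field)"
  shows "f = 0"
proof
  fix a
  show "f a = 0 a"
  proof (rule ccontr)
    assume fa: "f a \<noteq> 0 a"
    then have am: "a \<in> mons ds j" using f by (auto simp: graded_piece_def)
    then have la: "length a = length ds" and lt: "\<forall>k<length ds. a ! k < ds ! k" and sa: "sum_list a = j"
      by (auto simp: mons_def is_mon_def)
    have "\<exists>k<length ds. Suc (a ! k) < ds ! k"
    proof (rule ccontr)
      assume "\<not> ?thesis"
      then have e: "\<forall>k<length ds. a ! k = ds ! k - 1" proof (intro allI impI)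
        fix k assume k: "k < length ds"
        have "a ! k < ds ! k" "\<not> Suc (a ! k) < ds ! k" using lt k \<open>\<not> (\<exists>k<length ds. Suc (a ! k) < ds ! k)\<close> by auto
        then show "a ! k = ds ! k - 1" by linarith
      qed
      then have "a = map (\<lambda>d. d - 1) ds" using la by (intro nth_equalityI) auto
      then show False using sa jt by simp
    qed
    then obtain k where k: "k < length ds" "Suc (a ! k) < ds ! k" by blast
    define b where "b = a[k := Suc (a ! k)]"
    have bm: "is_mon ds b" using k la lt by (auto simp: b_def is_mon_def nth_list_update)
    have bk: "0 < b ! k" and ba: "b[k := b ! k - 1] = a" using k la by (auto simp: b_def)
    have "X ds k f b = f a" using bm bk ba by (simp add: X_def)
    then show False using X0 k fa by simp
  qed
qed

lemma down:
  assumes inj: "inj_on (lin_mult ds c) (graded_piece ds (Suc j) :: (nat list \<Rightarrow> 'k::field) set)"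
    and jt: "j < (\<Sum>d\<leftarrow>ds. d - 1)"
  shows "inj_on (lin_mult ds c) (graded_piece ds j :: (nat list \<Rightarrow> 'k) set)"
proof -
  interpret L: module_hom sc sc "lin_mult ds c :: (nat list \<Rightarrow> 'k) \<Rightarrow> _" by (rule L_hom)
  have inj0: "\<forall>x\<in>graded_piece ds (Suc j). lin_mult ds c x = 0 \<longrightarrow> x = (0 :: nat list \<Rightarrow> 'k)"
    using inj L.inj_on_iff_eq_0[OF G_subspace] by blast
  have "\<forall>f\<in>graded_piece ds j. lin_mult ds c f = 0 \<longrightarrow> f = (0 :: nat list \<Rightarrow> 'k)"
  proof (intro ballI impI)
    fix f :: "nat list \<Rightarrow> 'k" assume f: "f \<in> graded_piece ds j" "lin_mult ds c f = 0"
    have "\<forall>k<length ds. X ds k f = 0"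
    proof (intro allI impI)
      fix k assume k: "k < length ds"
      interpret Xk: module_hom sc sc "X ds k :: (nat list \<Rightarrow> 'k) \<Rightarrow> _" by (rule X_hom)
      have "lin_mult ds c (X ds k f) = X ds k (lin_mult ds c f)" by (rule L_X[OF k])
      also have "\<dots> = 0" using f(2) Xk.zero by simp
      finally have "lin_mult ds c (X ds k f) = 0" .
      then show "X ds k f = 0" using inj0 X_graded[OF k f(1)] by blast
    qed
    then show "f = 0" using socle[OF f(1) jt] by blast
  qed
  then show ?thesis using L.inj_on_iff_eq_0[OF G_subspace] by blast
qed

lemma X_delta:
  assumes k: "k < length ds" and bm: "is_mon ds b" and bk: "0 < b ! k"
  shows "X ds k (delta (b[k := b ! k - 1])) = (delta b :: nat list \<Rightarrow> 'k::field)"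
proof
  fix x
  have lb: "length b = length ds" using bm by (simp add: is_mon_def)
  have "x = b" if "is_mon ds x" "0 < x ! k" "x[k := x ! k - 1] = b[k := b ! k - 1]"
  proof -
    have lx: "length x = length ds" using that by (simp add: is_mon_def)
    have "x ! k - 1 = b ! k - 1" using arg_cong[OF that(3), of "\<lambda>l. l ! k"] k lx lb by simp
    then have e: "x ! k = b ! k" using that(2) bk by simp
    have "x = (x[k := x ! k - 1])[k := x ! k]" by simp
    also have "\<dots> = (b[k := b ! k - 1])[k := b ! k]" using that(3) e by simp
    also have "\<dots> = b" by simp
    finally show ?thesis .
  qed
  then show "X ds k (delta (b[k := b ! k - 1])) x = delta b x"
    using bm bk by (auto simp: X_def delta_def)
qed

lemma up:
  assumes k0: "lin_mult ds c ` graded_piece ds j = (graded_piece ds (Suc j) :: (nat list \<Rightarrow> 'k::field) set)"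
  shows "lin_mult ds c ` graded_piece ds (Suc j) = (graded_piece ds (Suc (Suc j)) :: (nat list \<Rightarrow> 'k) set)"
proof
  interpret L: module_hom sc sc "lin_mult ds c :: (nat list \<Rightarrow> 'k) \<Rightarrow> _" by (rule L_hom)
  show "lin_mult ds c ` graded_piece ds (Suc j) \<subseteq> graded_piece ds (Suc (Suc j))"
    using L_graded by blast
  have sub: "fvs.subspace (lin_mult ds c ` (graded_piece ds (Suc j) :: (nat list \<Rightarrow> 'k) set))"
    by (rule L.subspace_image[OF G_subspace])
  have "delta b \<in> lin_mult ds c ` (graded_piece ds (Suc j) :: (nat list \<Rightarrow> 'k) set)"
    if b: "b \<in> mons ds (Suc (Suc j))" for b
  proof -
    have bm: "is_mon ds b" and sb: "sum_list b = Suc (Suc j)" and lb: "length b = length ds"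
      using b by (auto simp: mons_def is_mon_def)
    obtain k where k: "k < length ds" "0 < b ! k"
    proof -
      have "\<exists>x\<in>set b. x \<noteq> 0" using sb sum_list_eq_0_iff[of b] by auto
      then show ?thesis using that lb by (auto simp: in_set_conv_nth)
    qed
    define a where "a = b[k := b ! k - 1]"
    have am: "a \<in> mons ds (Suc j)"
      using is_mon_dec[OF bm] sum_dec'[of k b] k lb sb by (simp add: a_def mons_def)
    have "(delta a :: nat list \<Rightarrow> 'k) \<in> graded_piece ds (Suc j)"
      unfolding graded_span using am by (intro fvs.span_base) auto
    then obtain h where h: "h \<in> graded_piece ds j" "delta a = lin_mult ds c h" using k0 by blast
    have "(delta b :: nat list \<Rightarrow> 'k) = X ds k (delta a)" using X_delta[OF k(1) bm k(2)] unfolding a_def by metis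
    also have "\<dots> = lin_mult ds c (X ds k h)" by (simp add: h(2) L_X[OF k(1)])
    finally show ?thesis using X_graded[OF k(1) h(1)] by blast
  qed
  then show "graded_piece ds (Suc (Suc j)) \<subseteq> lin_mult ds c ` graded_piece ds (Suc j)"
    unfolding graded_span[of ds "Suc (Suc j)"] by (intro fvs.span_minimal[OF _ sub]) auto
qed

definition cmpl :: "nat list \<Rightarrow> nat list \<Rightarrow> nat list" where
  "cmpl ds a = map (\<lambda>j. ds ! j - 1 - a ! j) [0..<length ds]"

lemma cmpl_mon: "is_mon ds a \<Longrightarrow> \<forall>d\<in>set ds. 0 < d \<Longrightarrow> is_mon ds (cmpl ds a)"
  by (auto simp: is_mon_def cmpl_def)

lemma cmpl_comp: "is_mon ds a \<Longrightarrow> cmpl ds (cmpl ds a) = a"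
  by (auto simp: is_mon_def cmpl_def intro!: nth_equalityI)

lemma cmpl_sum: assumes "is_mon ds a"
  shows "sum_list a + sum_list (cmpl ds a) = (\<Sum>d\<leftarrow>ds. d - 1)"
proof -
  have la: "length a = length ds" and lt: "\<forall>j<length ds. a ! j < ds ! j" using assms by (auto simp: is_mon_def)
  have "sum_list a + sum_list (cmpl ds a) = (\<Sum>j<length ds. a ! j) + (\<Sum>j<length ds. ds ! j - 1 - a ! j)"
    by (simp add: sum_list_sum_nth la cmpl_def atLeast0LessThan sum_set_upt_conv_sum_list_nat[symmetric])
  also have "\<dots> = (\<Sum>j<length ds. a ! j + (ds ! j - 1 - a ! j))" by (simp add: sum.distrib)
  also have "\<dots> = (\<Sum>j<length ds. ds ! j - 1)"
  proof (rule sum.cong[OF refl])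
    fix j assume "j \<in> {..<length ds}"
    then have "a ! j < ds ! j" using lt by simp
    then show "a ! j + (ds ! j - 1 - a ! j) = ds ! j - 1" by linarith
  qed
  also have "\<dots> = (\<Sum>d\<leftarrow>ds. d - 1)"
    by (simp add: sum_list_sum_nth atLeast0LessThan)
  finally show ?thesis .
qed

lemma card_mid:
  assumes pos: "\<forall>d\<in>set ds. 0 < d" and t: "(\<Sum>d\<leftarrow>ds. d - 1) = Suc (2 * m)"
  shows "card (mons ds m) = card (mons ds (Suc m))"
proof -
  have inj: "inj_on (cmpl ds) (mons ds i)" for i
    by (rule inj_on_inverseI[where g = "cmpl ds"]) (auto simp: mons_def cmpl_comp)
  have m1: "cmpl ds ` mons ds m \<subseteq> mons ds (Suc m)"
    using cmpl_mon[OF _ pos] cmpl_sum t by (fastforce simp: mons_def)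
  have m2: "cmpl ds ` mons ds (Suc m) \<subseteq> mons ds m"
    using cmpl_mon[OF _ pos] cmpl_sum t by (fastforce simp: mons_def)
  show ?thesis using card_inj_on_le[OF inj m1 finite_mons] card_inj_on_le[OF inj m2 finite_mons] by simp
qed

lemma mid:
  assumes pos: "\<forall>d\<in>set ds. 0 < d" and t: "(\<Sum>d\<leftarrow>ds. d - 1) = Suc (2 * m)"
    and w: "inj_on (lin_mult ds c) (graded_piece ds m :: (nat list \<Rightarrow> 'k::field) set) \<or>
            lin_mult ds c ` graded_piece ds m = (graded_piece ds (Suc m) :: (nat list \<Rightarrow> 'k) set)"
  shows "inj_on (lin_mult ds c) (graded_piece ds m :: (nat list \<Rightarrow> 'k::field) set) \<and>
            lin_mult ds c ` graded_piece ds m = (graded_piece ds (Suc m) :: (nat list \<Rightarrow> 'k) set)"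
proof -
  let ?E = "delta ` mons ds m :: (nat list \<Rightarrow> 'k) set"
  let ?F = "delta ` mons ds (Suc m) :: (nat list \<Rightarrow> 'k) set"
  have fE: "finite ?E" "finite ?F" using finite_mons by auto
  have iE: "fvs.independent ?E" "fvs.independent ?F" by (rule indep_delta)+
  have cE: "card ?E = card ?F"
    using card_mid[OF pos t] delta_inj by (simp add: card_image inj_on_subset[OF delta_inj])
  have lin: "Vector_Spaces.linear sc sc (lin_mult ds c :: (nat list \<Rightarrow> 'k) \<Rightarrow> _)"
    using L_hom by (simp add: module_hom_iff_linear)
  have sub: "lin_mult ds c ` fvs.span ?E \<subseteq> fvs.span ?F"
    using L_graded[of _ ds m c] unfolding graded_span by blast
  show ?thesis using w fvs.inj_imp_surj_card[OF fE iE cE lin sub] fvs.surj_imp_inj_card[OF fE iE cE lin]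
    unfolding graded_span by blast
qed

lemma step1:
  assumes pos: "\<forall>d\<in>set ds. 0 < d" and t: "(\<Sum>d\<leftarrow>ds. d - 1) = Suc (2 * m)"
    and w: "\<forall>i. inj_on (lin_mult ds c) (graded_piece ds i :: (nat list \<Rightarrow> 'k::field) set) \<or>
            lin_mult ds c ` graded_piece ds i = (graded_piece ds (Suc i) :: (nat list \<Rightarrow> 'k) set)"
  shows "\<forall>j\<le>m. inj_on (lin_mult ds c) (graded_piece ds j :: (nat list \<Rightarrow> 'k) set)"
    and "\<forall>j\<ge>m. lin_mult ds c ` graded_piece ds j = (graded_piece ds (Suc j) :: (nat list \<Rightarrow> 'k) set)"
proof -
  note M = mid[OF pos t w[rule_format, of m]]
  have "inj_on (lin_mult ds c) (graded_piece ds (m - r) :: (nat list \<Rightarrow> 'k) set)" for r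
  proof (induction r)
    case 0 then show ?case using M by simp
  next
    case (Suc r)
    show ?case
    proof (cases "r < m")
      case True
      then have "Suc (m - Suc r) = m - r" by simp
      then show ?thesis using down[of ds c "m - Suc r"] Suc t by (metis less_le_trans diff_le_self le_less_trans lessI le_add1
          Suc_le_eq mult_2 trans_le_add1)
    next
      case False then show ?thesis using Suc by simp
    qed
  qed
  then show "\<forall>j\<le>m. inj_on (lin_mult ds c) (graded_piece ds j :: (nat list \<Rightarrow> 'k) set)"
    by (metis diff_diff_cancel)
  have "lin_mult ds c ` graded_piece ds (m + r) = (graded_piece ds (Suc (m + r)) :: (nat list \<Rightarrow> 'k) set)" for r
  proof (induction r)
    case 0 then show ?case using M by simp
  next
    case (Suc r) then show ?case using up by simp
  qed
  then show "\<forall>j\<ge>m. lin_mult ds c ` graded_piece ds j = (graded_piece ds (Suc j) :: (nat list \<Rightarrow> 'k) set)"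
    by (metis le_add_diff_inverse)
qed

lemma is_mon_app: "is_mon (ds @ [2]) (u @ [e]) \<longleftrightarrow> is_mon ds u \<and> e < 2"
proof
  assume H: "is_mon (ds @ [2]) (u @ [e])"
  then have lu: "length u = length ds" by (simp add: is_mon_def)
  have "u ! j < ds ! j" if "j < length ds" for j
    using H that lu spec[OF H[unfolded is_mon_def, THEN conjunct2], of j] by (simp add: nth_append)
  moreover have "e < 2" using H lu spec[OF H[unfolded is_mon_def, THEN conjunct2], of "length ds"] by (simp add: nth_append)
  ultimately show "is_mon ds u \<and> e < 2" using lu by (simp add: is_mon_def)
next
  assume H: "is_mon ds u \<and> e < 2"
  then have lu: "length u = length ds" by (simp add: is_mon_def)
  have "(u @ [e]) ! j < (ds @ [2]) ! j" if "j < Suc (length ds)" for j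
    using H that lu by (cases "j < length ds") (auto simp: nth_append is_mon_def less_Suc_eq)
  then show "is_mon (ds @ [2]) (u @ [e])" using lu by (simp add: is_mon_def)
qed

lemma mons_app: "u @ [e] \<in> mons (ds @ [2]) i \<longleftrightarrow> is_mon ds u \<and> e < 2 \<and> sum_list u + e = i"
  by (simp add: mons_def is_mon_app)

lemma is_mon_app_split: "is_mon (ds @ [2]) v \<Longrightarrow> \<exists>u e. v = u @ [e] \<and> e < 2 \<and> is_mon ds u"
proof -
  assume H: "is_mon (ds @ [2]) v"
  then have "v \<noteq> []" by (auto simp: is_mon_def)
  then have "v = butlast v @ [last v]" by simp
  then show ?thesis using H is_mon_app by metis
qed

lemma L_app:
  assumes e: "e < 2"
  shows "lin_mult (ds @ [2]) (c(length ds := 1)) f (u @ [e]) =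
    (if is_mon ds u then lin_mult ds c (\<lambda>w. f (w @ [e])) u + (if 0 < e then f (u @ [e - 1]) else 0) else 0)"
proof (cases "is_mon ds u")
  case True
  then have lu: "length u = length ds" by (simp add: is_mon_def)
  have "lin_mult (ds @ [2]) (c(length ds := 1)) f (u @ [e]) =
     (\<Sum>j<Suc (length ds). if 0 < (u @ [e]) ! j then (c(length ds := 1)) j * f ((u @ [e])[j := (u @ [e]) ! j - 1]) else 0)"
    using True e by (simp add: lin_mult_def is_mon_app)
  also have "\<dots> = (\<Sum>j<length ds. if 0 < u ! j then c j * f (u[j := u ! j - 1] @ [e]) else 0) +
      (if 0 < e then f (u @ [e - 1]) else 0)"
  proof -
    have "(\<Sum>j<length ds. if 0 < (u @ [e]) ! j then (c(length ds := 1)) j * f ((u @ [e])[j := (u @ [e]) ! j - 1]) else 0)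
       = (\<Sum>j<length ds. if 0 < u ! j then c j * f (u[j := u ! j - 1] @ [e]) else 0)"
      by (rule sum.cong[OF refl]) (simp add: lu nth_append list_update_append1)
    moreover have "(u @ [e])[length ds := e - 1] = u @ [e - 1]" using lu by (simp add: list_update_append)
    ultimately show ?thesis using lu by (simp add: nth_append)
  qed
  also have "(\<Sum>j<length ds. if 0 < u ! j then c j * f (u[j := u ! j - 1] @ [e]) else 0) =
     lin_mult ds c (\<lambda>w. f (w @ [e])) u" using True by (simp add: lin_mult_def)
  finally show ?thesis by (simp only: True if_True)
next
  case False
  then show ?thesis by (simp add: lin_mult_def is_mon_app)
qed

lemma part0: "f \<in> graded_piece (ds @ [2]) i \<Longrightarrow> (\<lambda>u. f (u @ [0])) \<in> graded_piece ds i"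
  by (auto simp: graded_piece_def mons_app mons_def is_mon_app)

lemma part1: "f \<in> graded_piece (ds @ [2]) (Suc i) \<Longrightarrow> (\<lambda>u. f (u @ [1])) \<in> graded_piece ds i"
  by (auto simp: graded_piece_def mons_app mons_def is_mon_app)

lemma part1_0: "f \<in> graded_piece (ds @ [2]) 0 \<Longrightarrow> (\<lambda>u. f (u @ [1])) = (\<lambda>u. 0)"
  by (auto simp: graded_piece_def mons_app fun_eq_iff)

lemma fun_app_eq:
  assumes f: "f \<in> graded_piece (ds @ [2]) i"
    and a: "\<And>u. f (u @ [0]) = 0" and b: "\<And>u. f (u @ [1]) = 0"
  shows "f v = 0"
proof (cases "is_mon (ds @ [2]) v")
  case True
  then obtain u e where "v = u @ [e]" "e < 2" using is_mon_app_split by blast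
  then show ?thesis using a b by (cases e) (auto simp: less_Suc_eq)
next
  case False
  then show ?thesis using f by (auto simp: graded_piece_def mons_def)
qed

theorem main:
  fixes ds :: "nat list"
  assumes "\<forall>d\<in>set ds. 0 < d"
    and "odd (\<Sum>d\<leftarrow>ds. d - 1)"
    and "has_WLP TYPE('k::field) ds"
  shows "has_WLP TYPE('k) (ds @ [2])"
proof -
  obtain c :: "nat \<Rightarrow> 'k" where w: "\<forall>i. inj_on (lin_mult ds c) (graded_piece ds i) \<or>
        lin_mult ds c ` graded_piece ds i = graded_piece ds (Suc i)"
    using assms(3) unfolding has_WLP_def by blast
  define m where "m = (\<Sum>d\<leftarrow>ds. d - 1) div 2"
  have t: "(\<Sum>d\<leftarrow>ds. d - 1) = Suc (2 * m)" using assms(2) unfolding m_def by presburger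
  note INJ = step1(1)[OF assms(1) t w] and SUR = step1(2)[OF assms(1) t w]
  define c' where "c' = c(length ds := 1)"
  let ?L = "lin_mult ds c :: (nat list \<Rightarrow> 'k) \<Rightarrow> _"
  let ?L' = "lin_mult (ds @ [2]) c' :: (nat list \<Rightarrow> 'k) \<Rightarrow> _"
  interpret L: module_hom sc sc ?L by (rule L_hom)
  interpret L': module_hom sc sc ?L' by (rule L_hom)
  have INJ0: "\<And>j x. j \<le> m \<Longrightarrow> x \<in> graded_piece ds j \<Longrightarrow> ?L x = 0 \<Longrightarrow> x = 0"
    using INJ L.inj_on_iff_eq_0[OF G_subspace] by blast
  have Lapp0: "?L' f (u @ [0]) = ?L (\<lambda>w. f (w @ [0])) u" for f u
    using L_app[of 0 ds c f u] by (simp add: c'_def lin_mult_def)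
  have Lapp1: "?L' f (u @ [1]) = ?L (\<lambda>w. f (w @ [1])) u + (if is_mon ds u then f (u @ [0]) else 0)" for f u
    using L_app[of 1 ds c f u] by (simp add: c'_def lin_mult_def)
  have "inj_on ?L' (graded_piece (ds @ [2]) i) \<or> ?L' ` graded_piece (ds @ [2]) i = graded_piece (ds @ [2]) (Suc i)"
    for i
  proof (cases "i \<le> m")
    case True
    have "\<forall>f\<in>graded_piece (ds @ [2]) i. ?L' f = 0 \<longrightarrow> f = 0"
    proof (intro ballI impI)
      fix f assume f: "f \<in> graded_piece (ds @ [2]) i" and f0: "?L' f = 0"
      define a where "a = (\<lambda>u. f (u @ [0]))"
      define b where "b = (\<lambda>u. f (u @ [1]))"
      have aG: "a \<in> graded_piece ds i" unfolding a_def by (rule part0[OF f])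
      have La: "?L a = 0"
      proof
        fix u show "?L a u = 0 u" using Lapp0[of f u] f0 by (simp add: a_def)
      qed
      have ab: "a = - ?L b"
      proof
        fix u
        show "a u = (- ?L b) u"
        proof (cases "is_mon ds u")
          case True
          then show ?thesis using Lapp1[of f u] f0 by (simp add: a_def b_def eq_neg_iff_add_eq_0 add.commute)
        next
          case False
          then show ?thesis using aG by (simp add: graded_piece_def mons_def lin_mult_def)
        qed
      qed
      have b0: "b = 0"
      proof (cases i)
        case 0
        then show ?thesis using part1_0[of f ds] f by (simp add: b_def fun_eq_iff)
      next
        case (Suc i')
        have bG: "b \<in> graded_piece ds i'" using part1[of f ds i'] f Suc by (simp add: b_def)
        have "?L (?L b) = 0" using La ab L.neg by simp
        then have "?L b = 0" using INJ0[of i "?L b"] True L_graded[OF bG, of c] Suc by simp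
        then show "b = 0" using INJ0[of i' b] Suc True bG by simp
      qed
      then have a0: "a = 0" using ab by simp
      show "f = 0"
      proof
        fix v show "f v = 0 v"
          using fun_app_eq[OF f, of v] a0 b0 by (simp add: a_def b_def fun_eq_iff)
      qed
    qed
    then show ?thesis using L'.inj_on_iff_eq_0[OF G_subspace] by blast
  next
    case False
    then obtain i' where i': "i = Suc i'" "m \<le> i'" by (cases i) auto
    have "?L' ` graded_piece (ds @ [2]) i = graded_piece (ds @ [2]) (Suc i)"
    proof
      show "?L' ` graded_piece (ds @ [2]) i \<subseteq> graded_piece (ds @ [2]) (Suc i)"
        using L_graded by blast
      show "graded_piece (ds @ [2]) (Suc i) \<subseteq> ?L' ` graded_piece (ds @ [2]) i"
      proof
        fix g :: "nat list \<Rightarrow> 'k" assume g: "g \<in> graded_piece (ds @ [2]) (Suc i)"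
        define p where "p = (\<lambda>u. g (u @ [0]))"
        define q where "q = (\<lambda>u. g (u @ [1]))"
        have pG: "p \<in> graded_piece ds (Suc i)" unfolding p_def by (rule part0[OF g])
        have qG: "q \<in> graded_piece ds i" unfolding q_def by (rule part1[OF g])
        have "?L q - p \<in> graded_piece ds (Suc i)"
          by (rule fvs.subspace_diff[OF G_subspace L_graded[OF qG] pG])
        then obtain y where y: "y \<in> graded_piece ds i" "?L y = ?L q - p"
        proof -
          have "m \<le> i" using i' by simp
          then have "?L ` graded_piece ds i = graded_piece ds (Suc i)" using SUR by blast
          then have "?L q - p \<in> ?L ` graded_piece ds i" using \<open>?L q - p \<in> graded_piece ds (Suc i)\<close> by simp
          then obtain y where "y \<in> graded_piece ds i" "?L q - p = ?L y" by (rule imageE)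
          then show ?thesis using that by simp
        qed
        obtain b where b: "b \<in> graded_piece ds i'" "?L b = y"
        proof -
          have "?L ` graded_piece ds i' = graded_piece ds (Suc i')" using SUR i'(2) by blast
          then have "y \<in> ?L ` graded_piece ds i'" using y(1) i'(1) by simp
          then obtain z where "z \<in> graded_piece ds i'" "y = ?L z" by (rule imageE)
          then show ?thesis using that by simp
        qed
        define a where "a = q - ?L b"
        have aG: "a \<in> graded_piece ds i"
          unfolding a_def using fvs.subspace_diff[OF G_subspace qG, of "?L b"] L_graded[OF b(1), of c] i' by simp
        have La: "?L a = p" unfolding a_def using L.diff b y by simp
        define f where "f = (\<lambda>v. if v \<noteq> [] \<and> last v = 0 then a (butlast v)
                              else if v \<noteq> [] \<and> last v = 1 then b (butlast v) else 0)"
        have f0: "(\<lambda>u. f (u @ [0])) = a" and f1: "(\<lambda>u. f (u @ [1])) = b"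
          by (auto simp: f_def fun_eq_iff)
        have f0u: "\<And>u. f (u @ [0]) = a u" by (simp add: f_def)
        have fG: "f \<in> graded_piece (ds @ [2]) i"
          unfolding graded_piece_def mem_Collect_eq
        proof (intro allI impI)
          fix v assume v: "v \<notin> mons (ds @ [2]) i"
          show "f v = 0"
          proof (cases "v \<noteq> [] \<and> (last v = 0 \<or> last v = 1)")
            case True
            have "v = butlast v @ [last v]" using True by simp
            then obtain u e where ue: "v = u @ [e]" "e = 0 \<or> e = 1" using True by blast
            show ?thesis
            proof (cases "e = 0")
              case True
              then have "u \<notin> mons ds i" using v ue by (auto simp: mons_app mons_def is_mon_app)
              then show ?thesis using aG ue True by (simp add: f_def graded_piece_def)
            next
              case False
              then have "u \<notin> mons ds i'" using v ue i' by (auto simp: mons_app mons_def is_mon_app)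
              then show ?thesis using b(1) ue False by (simp add: f_def graded_piece_def)
            qed
          next
            case False
            then show ?thesis by (auto simp: f_def)
          qed
        qed
        have "?L' f = g"
        proof
          fix v
          show "?L' f v = g v"
          proof (cases "is_mon (ds @ [2]) v")
            case True
            then obtain u e where ue: "v = u @ [e]" "e < 2" "is_mon ds u" using is_mon_app_split by blast
            show ?thesis
            proof (cases "e = 0")
              case True
              then show ?thesis using Lapp0[of f u] ue f0 La by (simp add: p_def)
            next
              case False
              then have "e = 1" using ue by simp
              have "?L' f v = ?L b u + a u" using Lapp1[of f u] ue f1 f0u \<open>e = 1\<close> by simp
              also have "\<dots> = q u" by (simp add: a_def)
              finally show ?thesis using \<open>e = 1\<close> ue by (simp add: q_def)
            qed
          next
            case False
            then show ?thesis using g by (simp add: lin_mult_def graded_piece_def mons_def)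
          qed
        qed
        then show "g \<in> ?L' ` graded_piece (ds @ [2]) i" using fG by blast
      qed
    qed
    then show ?thesis by blast
  qed
  then show ?thesis unfolding has_WLP_def by blast
qed

theorem proposition4p13:
  fixes ds :: "nat list"
  assumes "\<forall>d\<in>set ds. 0 < d"
    and "odd (\<Sum>d\<leftarrow>ds. d - 1)"
    and "has_WLP TYPE('k::field) ds"
  shows "has_WLP TYPE('k) (ds @ [2])"
  using main[OF assms] .

end
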